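(* Fix $\delta>0$ and any sequence $(T_N)_N$ with $T_N\in2\mathbb N$. For every $\varepsilon>0$ there exists $\ell_0=\ell_0(\varepsilon)\in\mathbb N$ such that for every $N\in\mathbb N$, $$\mathbf P^{T_N}_{N,\delta}(\mu_N<N-\ell_0)=\sum_{\ell=\ell_0+1}^{N}\mathbf P^{T_N}_{N,\delta}(\mu_N=N-\ell)\le\varepsilon,$$ where $\mu_N:=\max\{0\le n\le N: S_n\in T_N\mathbb Z\}$.
   Context: $(S_n)_{n\ge0}$ is the simple symmetric random walk on $\mathbb Z$ started at $0$, with law $\mathbf P$. For $T\in2\mathbb N$, $N\in\mathbb N$, $\delta\in\mathbb R$, the polymer measure $\mathbf P^T_{N,\delta}$ is defined by $\frac{d\mathbf P^T_{N,\delta}}{d\mathbf P}(S)=\frac{\exp(\delta\sum_{i=1}^N\mathbf 1_{\{S_i\in T\mathbb Z\}})}{Z^T_{N,\delta}}$, with $Z^T_{N,\delta}$ the normalizing constant. *)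

theory Defs
  imports Complex_Main
begin

text \<open>Simple random walk paths up to time N are encoded by their increment lists
  xs \<in> {-1,1}^N; under the SRW law P each such list has probability 2^(-N).
  All events considered depend only on S_0,...,S_N, so the polymer measure
  P^T_{N,delta} is represented by its (exact) marginal on these increment lists.\<close>

definition paths :: "nat \<Rightarrow> int list set" where
  "paths N = {xs. length xs = N \<and> set xs \<subseteq> {-1, 1}}"

definition walk :: "int list \<Rightarrow> nat \<Rightarrow> int" where
  "walk xs n = sum_list (take n xs)"

definition visits :: "int \<Rightarrow> nat \<Rightarrow> int list \<Rightarrow> nat" where
  "visits T N xs = card {i \<in> {1..N}. T dvd walk xs i}"

definition weight :: "int \<Rightarrow> nat \<Rightarrow> real \<Rightarrow> int list \<Rightarrow> real" where
  "weight T N \<delta> xs = exp (\<delta> * real (visits T N xs))"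

definition Zpol :: "int \<Rightarrow> nat \<Rightarrow> real \<Rightarrow> real" where
  "Zpol T N \<delta> = (\<Sum>xs\<in>paths N. weight T N \<delta> xs / 2 ^ N)"

definition Ppol :: "int \<Rightarrow> nat \<Rightarrow> real \<Rightarrow> (int list \<Rightarrow> bool) \<Rightarrow> real" where
  "Ppol T N \<delta> A = (\<Sum>xs\<in>{xs\<in>paths N. A xs}. weight T N \<delta> xs / 2 ^ N) / Zpol T N \<delta>"

definition mu :: "int \<Rightarrow> nat \<Rightarrow> int list \<Rightarrow> nat" where
  "mu T N xs = Max {n \<in> {0..N}. T dvd walk xs n}"

end

theory Submission
  imports Defs
begin


lemma paths_finite: "finite (paths n)"
  using finite_lists_length_eq[of "{-1,1::int}" n] unfolding paths_def
  by (simp add: conj_commute numeral_2_eq_2)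

lemma paths_card: "card (paths n) = 2^n"
  using card_lists_length_eq[of "{-1,1::int}" n] unfolding paths_def
  by (simp add: conj_commute numeral_2_eq_2)

lemma paths_nonempty: "replicate n 1 \<in> paths n"
  unfolding paths_def by auto

lemma walk_append1: "i \<le> length xs \<Longrightarrow> walk (xs @ ys) i = walk xs i"
  unfolding walk_def by simp

lemma walk_append2: "walk (xs @ ys) (length xs + j) = walk xs (length xs) + walk ys j"
  unfolding walk_def by simp



lemma sum_paths_split:
  "(\<Sum>zs\<in>paths (a+b). f zs) = (\<Sum>xs\<in>paths a. \<Sum>ys\<in>paths b. f (xs @ ys))"
proof -
  have img: "paths (a+b) = (\<lambda>(xs,ys). xs @ ys) ` (paths a \<times> paths b)"
  proof (rule set_eqI, rule iffI)
    fix zs assume "zs \<in> paths (a+b)"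
    then have "(take a zs, drop a zs) \<in> paths a \<times> paths b"
      unfolding paths_def by (auto dest: in_set_takeD in_set_dropD)
    moreover have "zs = (\<lambda>(xs,ys). xs @ ys) (take a zs, drop a zs)" by simp
    ultimately show "zs \<in> (\<lambda>(xs,ys). xs @ ys) ` (paths a \<times> paths b)"
      by (rule rev_image_eqI)
  next
    fix zs assume "zs \<in> (\<lambda>(xs,ys). xs @ ys) ` (paths a \<times> paths b)"
    then show "zs \<in> paths (a+b)" unfolding paths_def by auto
  qed
  have inj: "inj_on (\<lambda>(xs,ys). xs @ ys) (paths a \<times> paths b)"
  proof (rule inj_onI)
    fix p q assume p: "p \<in> paths a \<times> paths b" and q: "q \<in> paths a \<times> paths b"
      and e: "(\<lambda>(xs,ys). xs @ ys) p = (\<lambda>(xs,ys). xs @ ys) q"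
    obtain x1 y1 x2 y2 where pq: "p = (x1,y1)" "q = (x2,y2)" by (cases p, cases q) auto
    have "length x1 = length x2" using p q pq by (simp add: paths_def)
    then show "p = q" using e pq by simp
  qed
  have "(\<Sum>zs\<in>paths (a+b). f zs) = (\<Sum>q\<in>paths a \<times> paths b. f ((\<lambda>(xs,ys). xs @ ys) q))"
    unfolding img by (subst sum.reindex[OF inj]) (simp add: comp_def)
  also have "\<dots> = (\<Sum>xs\<in>paths a. \<Sum>ys\<in>paths b. f (xs @ ys))"
    by (subst sum.cartesian_product) (simp add: case_prod_beta)
  finally show ?thesis .
qed

lemma visits_prefix:
  assumes "length xs = a"
  shows "visits T a (xs @ ys) = visits T a xs"
proof -
  have "{i \<in> {1..a}. T dvd walk (xs @ ys) i} = {i \<in> {1..a}. T dvd walk xs i}"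
    using assms by (auto simp: walk_append1)
  then show ?thesis unfolding visits_def by simp
qed

lemma visits_append:
  assumes "length xs = a" "T dvd walk xs a"
  shows "visits T (a+b) (xs @ ys) = visits T a xs + visits T b ys"
proof -
  let ?A = "{i \<in> {1..a}. T dvd walk xs i}"
  let ?B = "{i \<in> {1..b}. T dvd walk ys i}"
  have "{i \<in> {1..a+b}. T dvd walk (xs@ys) i} = ?A \<union> (\<lambda>j. a + j) ` ?B"
  proof (rule set_eqI)
    fix i
    show "i \<in> {i \<in> {1..a+b}. T dvd walk (xs@ys) i} \<longleftrightarrow> i \<in> ?A \<union> (\<lambda>j. a + j) ` ?B"
    proof (cases "i \<le> a")
      case True thus ?thesis using assms by (auto simp: walk_append1)
    next
      case False
      define j where "j = i - a"
      have j: "i = a + j" "j > 0" using False by (auto simp: j_def)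
      have "walk (xs@ys) i = walk xs a + walk ys j" using walk_append2[of xs ys j] assms j by simp
      then have "T dvd walk (xs@ys) i \<longleftrightarrow> T dvd walk ys j" using assms(2) by (simp add: dvd_add_right_iff)
      then show ?thesis using j False by auto
    qed
  qed
  moreover have "?A \<inter> (\<lambda>j. a + j) ` ?B = {}" by auto
  moreover have "card ((\<lambda>j. a + j) ` ?B) = card ?B" by (rule card_image) (auto simp: inj_on_def)
  ultimately show ?thesis unfolding visits_def by (simp add: card_Un_disjoint)
qed


definition Wt :: "int \<Rightarrow> nat \<Rightarrow> real \<Rightarrow> (int list \<Rightarrow> bool) \<Rightarrow> real" where
  "Wt T N d A = (\<Sum>xs\<in>paths N. if A xs then weight T N d xs else 0)"

lemma weight_pos: "weight T N d xs > 0" unfolding weight_def by simp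

lemma Wt_nonneg: "Wt T N d A \<ge> 0"
  unfolding Wt_def by (intro sum_nonneg) (auto intro: less_imp_le[OF weight_pos])

lemma Wt_pos: "Wt T N d (\<lambda>_. True) > 0"
  unfolding Wt_def using paths_finite paths_nonempty
  by (auto intro!: sum_pos weight_pos)

lemma Ppol_eq: "Ppol T N d A = Wt T N d A / Wt T N d (\<lambda>_. True)"
proof -
  have 1: "(\<Sum>xs\<in>{xs\<in>paths N. A xs}. weight T N d xs / 2^N) = Wt T N d A / 2^N"
    unfolding Wt_def sum.inter_filter[OF paths_finite] sum_divide_distrib
    by (intro sum.cong) auto
  have 2: "Zpol T N d = Wt T N d (\<lambda>_. True) / 2^N"
    unfolding Wt_def Zpol_def sum_divide_distrib by simp
  show ?thesis unfolding Ppol_def 1 2 by simp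
qed

lemma walk0: "walk xs 0 = 0" unfolding walk_def by simp

lemma mu_eq_iff:
  assumes "m \<le> N"
  shows "mu T N xs = m \<longleftrightarrow> T dvd walk xs m \<and> (\<forall>i. m < i \<and> i \<le> N \<longrightarrow> \<not> T dvd walk xs i)"
proof -
  have fin: "finite {n \<in> {0..N}. T dvd walk xs n}" by simp
  have ne: "{n \<in> {0..N}. T dvd walk xs n} \<noteq> {}" using walk0 by force
  show ?thesis unfolding mu_def Max_eq_iff[OF fin ne] using assms
    by (auto simp: not_less) (meson leI)+
qed

lemma mu_le: "mu T N xs \<le> N"
proof -
  have fin: "finite {n \<in> {0..N}. T dvd walk xs n}" by simp
  have ne: "{n \<in> {0..N}. T dvd walk xs n} \<noteq> {}" using walk0 by force
  show ?thesis unfolding mu_def using Max_in[OF fin ne] by auto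
qed

definition Apin :: "int \<Rightarrow> nat \<Rightarrow> real \<Rightarrow> real" where
  "Apin T a d = Wt T a d (\<lambda>xs. T dvd walk xs a)"

lemma mu_bound:
  "Wt T (a+k) d (\<lambda>xs. mu T (a+k) xs = a) \<le> 2^k * Apin T a d"
proof -
  have "Wt T (a+k) d (\<lambda>xs. mu T (a+k) xs = a)
      = (\<Sum>xs\<in>paths a. \<Sum>ys\<in>paths k. if mu T (a+k) (xs@ys) = a then weight T (a+k) d (xs@ys) else 0)"
    unfolding Wt_def by (rule sum_paths_split)
  also have "\<dots> \<le> (\<Sum>xs\<in>paths a. \<Sum>ys\<in>paths k. if T dvd walk xs a then weight T a d xs else 0)"
  proof (intro sum_mono)
    fix xs ys assume xs: "xs \<in> paths a" and ys: "ys \<in> paths k"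
    have len: "length xs = a" using xs by (simp add: paths_def)
    show "(if mu T (a+k) (xs@ys) = a then weight T (a+k) d (xs@ys) else 0)
          \<le> (if T dvd walk xs a then weight T a d xs else 0)"
    proof (cases "mu T (a+k) (xs@ys) = a")
      case True
      then have h: "T dvd walk (xs@ys) a" "\<And>i. a < i \<Longrightarrow> i \<le> a+k \<Longrightarrow> \<not> T dvd walk (xs@ys) i"
        using mu_eq_iff[of a "a+k" T "xs@ys"] by auto
      have pin: "T dvd walk xs a" using h(1) len walk_append1[of a xs ys] by simp
      have "visits T k ys = 0"
      proof -
        have "{i \<in> {1..k}. T dvd walk ys i} = {}"
        proof (rule ccontr)
          assume "{i \<in> {1..k}. T dvd walk ys i} \<noteq> {}"
          then obtain i where i: "1 \<le> i" "i \<le> k" "T dvd walk ys i" by auto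
          have "walk (xs@ys) (a+i) = walk xs a + walk ys i" using walk_append2[of xs ys i] len by simp
          then have "T dvd walk (xs@ys) (a+i)" using pin i(3) by simp
          then show False using h(2)[of "a+i"] i by simp
        qed
        then show ?thesis unfolding visits_def by simp
      qed
      then have "weight T (a+k) d (xs@ys) = weight T a d xs"
        unfolding weight_def using visits_append[OF len pin] by simp
      then show ?thesis using True pin by simp
    qed (auto intro: less_imp_le[OF weight_pos])
  qed
  also have "\<dots> = 2^k * Apin T a d"
    unfolding Apin_def Wt_def by (simp add: paths_card sum_distrib_left)
  finally show ?thesis .
qed

lemma supermult:
  "Apin T a d * Wt T b d (\<lambda>_. True) \<le> Wt T (a+b) d (\<lambda>_. True)"
proof -
  have "Apin T a d * Wt T b d (\<lambda>_. True)
      = (\<Sum>xs\<in>paths a. \<Sum>ys\<in>paths b. if T dvd walk xs a then weight T a d xs * weight T b d ys else 0)"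
    unfolding Apin_def Wt_def sum_product by (intro sum.cong) auto
  also have "\<dots> \<le> (\<Sum>xs\<in>paths a. \<Sum>ys\<in>paths b. weight T (a+b) d (xs@ys))"
  proof (intro sum_mono)
    fix xs ys assume xs: "xs \<in> paths a" and ys: "ys \<in> paths b"
    have len: "length xs = a" using xs by (simp add: paths_def)
    show "(if T dvd walk xs a then weight T a d xs * weight T b d ys else 0) \<le> weight T (a+b) d (xs@ys)"
      using visits_append[OF len, of T b ys] weight_pos[of T "a+b" d "xs@ys"]
      by (auto simp: weight_def distrib_left exp_add)
  qed
  also have "\<dots> = Wt T (a+b) d (\<lambda>_. True)"
    unfolding Wt_def by (simp add: sum_paths_split)
  finally show ?thesis .
qed

lemma Wt_mono_T:
  assumes "d \<ge> 0"
  shows "Wt 0 k d (\<lambda>_. True) \<le> Wt T k d (\<lambda>_. True)"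
proof -
  have "exp (d * real (visits 0 k xs)) \<le> exp (d * real (visits T k xs))" for xs
  proof -
    have "visits 0 k xs \<le> visits T k xs"
      unfolding visits_def by (intro card_mono) auto
    then show ?thesis using assms by (simp add: mult_left_mono)
  qed
  then show ?thesis unfolding Wt_def weight_def by (simp add: sum_mono)
qed



lemma visits_Suc: "visits T (Suc n) xs = visits T n xs + (if T dvd walk xs (Suc n) then 1 else 0)"
proof -
  have "{i \<in> {1..Suc n}. T dvd walk xs i} = {i \<in> {1..n}. T dvd walk xs i} \<union> (if T dvd walk xs (Suc n) then {Suc n} else {})"
    by (auto simp: le_Suc_eq)
  then show ?thesis unfolding visits_def by (auto simp: card_insert_if)
qed

lemma exp_identity:
  fixes d :: real
  shows "exp (d * visits 0 n xs) = 1 + (1 - exp (-d)) * (\<Sum>i\<in>{1..n}. if walk xs i = 0 then exp (d * visits 0 i xs) else 0)"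
proof (induction n)
  case 0 then show ?case by (simp add: visits_def)
next
  case (Suc n)
  have s: "{1..Suc n} = insert (Suc n) {1..n}" by auto
  show ?case
  proof (cases "walk xs (Suc n) = 0")
    case True
    have "exp (d * visits 0 (Suc n) xs) = exp (d * visits 0 n xs) + (1 - exp (-d)) * exp (d * visits 0 (Suc n) xs)"
      using True by (simp add: visits_Suc algebra_simps exp_add[symmetric] exp_diff[symmetric])
    then show ?thesis using Suc True unfolding s by (simp add: algebra_simps)
  next
    case False
    then show ?thesis using Suc unfolding s by (simp add: visits_Suc)
  qed
qed

definition cnt :: "nat \<Rightarrow> real" where "cnt m = real (card {zs \<in> paths m. walk zs m = 0})"

lemma cnt_sum: "cnt m = (\<Sum>zs\<in>paths m. if walk zs m = 0 then 1 else 0)"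
  unfolding cnt_def by (simp add: sum.If_cases[OF paths_finite] Int_def conj_commute)

lemma split_pin:
  fixes d :: real
  shows "(\<Sum>xs\<in>paths (a+b). if walk xs (a+b) = 0 \<and> walk xs a = 0 then exp (d * visits 0 a xs) else 0)
   = Apin 0 a d * cnt b"
proof -
  have "(\<Sum>xs\<in>paths (a+b). if walk xs (a+b) = 0 \<and> walk xs a = 0 then exp (d * visits 0 a xs) else 0)
     = (\<Sum>ys\<in>paths a. \<Sum>zs\<in>paths b. if walk (ys@zs) (a+b) = 0 \<and> walk (ys@zs) a = 0 then exp (d * visits 0 a (ys@zs)) else 0)"
    by (rule sum_paths_split)
  also have "\<dots> = (\<Sum>ys\<in>paths a. \<Sum>zs\<in>paths b. (if walk ys a = 0 then exp (d * visits 0 a ys) else 0) * (if walk zs b = 0 then 1 else 0))"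
  proof (intro sum.cong refl)
    fix ys zs assume ys: "ys \<in> paths a"
    have len: "length ys = a" using ys by (simp add: paths_def)
    have 1: "walk (ys@zs) a = walk ys a" using walk_append1[of a ys zs] len by simp
    have 2: "walk (ys@zs) (a+b) = walk ys a + walk zs b" using walk_append2[of ys zs b] len by simp
    show "(if walk (ys@zs) (a+b) = 0 \<and> walk (ys@zs) a = 0 then exp (d * visits 0 a (ys@zs)) else 0)
        = (if walk ys a = 0 then exp (d * visits 0 a ys) else 0) * (if walk zs b = 0 then 1 else 0)"
      using 1 2 visits_prefix[OF len] by auto
  qed
  also have "\<dots> = Apin 0 a d * cnt b"
    unfolding Apin_def Wt_def cnt_sum sum_product weight_def by simp
  finally show ?thesis .
qed

lemma Apin0_ge: assumes "d \<ge> 0" shows "Apin 0 n d \<ge> cnt n"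
  unfolding Apin_def Wt_def cnt_sum weight_def
  using assms by (intro sum_mono) auto

lemma Apin0_rec:
  assumes "d \<ge> 0"
  shows "Apin 0 n d \<ge> (1 - exp (-d)) * (\<Sum>i\<in>{1..n}. Apin 0 i d * cnt (n - i))"
proof -
  let ?c = "1 - exp (-d)"
  have c0: "?c \<ge> 0" using assms by simp
  have "Apin 0 n d = (\<Sum>xs\<in>paths n. if walk xs n = 0 then exp (d * visits 0 n xs) else 0)"
    unfolding Apin_def Wt_def weight_def by simp
  also have "\<dots> = (\<Sum>xs\<in>paths n. (if walk xs n = 0 then 1 else 0) +
       ?c * (\<Sum>i\<in>{1..n}. if walk xs n = 0 \<and> walk xs i = 0 then exp (d * visits 0 i xs) else 0))"
    by (intro sum.cong refl) (subst exp_identity, auto intro!: sum.cong)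
  also have "\<dots> \<ge> (\<Sum>xs\<in>paths n. ?c * (\<Sum>i\<in>{1..n}. if walk xs n = 0 \<and> walk xs i = 0 then exp (d * visits 0 i xs) else 0))"
    by (intro sum_mono) auto
  also have "(\<Sum>xs\<in>paths n. ?c * (\<Sum>i\<in>{1..n}. if walk xs n = 0 \<and> walk xs i = 0 then exp (d * visits 0 i xs) else 0))
     = ?c * (\<Sum>i\<in>{1..n}. \<Sum>xs\<in>paths n. if walk xs n = 0 \<and> walk xs i = 0 then exp (d * visits 0 i xs) else 0)"
    by (simp add: sum_distrib_left[symmetric] sum.swap[of _ "paths n"])
  also have "(\<Sum>i\<in>{1..n}. \<Sum>xs\<in>paths n. if walk xs n = 0 \<and> walk xs i = 0 then exp (d * visits 0 i xs) else 0)
      = (\<Sum>i\<in>{1..n}. Apin 0 i d * cnt (n - i))"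
  proof (intro sum.cong refl)
    fix i assume "i \<in> {1..n}"
    then have n: "n = i + (n - i)" by simp
    show "(\<Sum>xs\<in>paths n. if walk xs n = 0 \<and> walk xs i = 0 then exp (d * visits 0 i xs) else 0) = Apin 0 i d * cnt (n - i)"
      using split_pin[of i "n - i" d] n by simp
  qed
  finally show ?thesis by simp
qed



lemma sum_list_paths:
  assumes "xs \<in> paths n"
  shows "sum_list xs = 2 * int (card {i\<in>{0..<n}. xs!i = 1}) - int n"
proof -
  have len: "length xs = n" and set: "set xs \<subseteq> {-1,1}" using assms by (auto simp: paths_def)
  have "sum_list xs = (\<Sum>i\<in>{0..<n}. xs!i)" using len by (simp add: sum_list_sum_nth)
  also have "\<dots> = (\<Sum>i\<in>{0..<n}. 2 * (if xs!i = 1 then 1 else 0) - 1)"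
  proof (intro sum.cong refl)
    fix i assume "i \<in> {0..<n}"
    then have "xs!i \<in> {-1,1}" using set len by (auto dest!: nth_mem)
    then show "xs!i = 2 * (if xs!i = 1 then 1 else 0) - 1" by auto
  qed
  also have "\<dots> = 2 * (\<Sum>i\<in>{0..<n}. if xs!i = 1 then 1 else 0) - int n"
    by (simp add: sum_subtractf sum_distrib_left)
  also have "(\<Sum>i\<in>{0..<n}. if xs!i = 1 then 1 else 0) = int (card ({0..<n} \<inter> {i. xs!i = 1}))"
    by (simp add: sum.If_cases)
  also have "{0..<n} \<inter> {i. xs!i = 1} = {i\<in>{0..<n}. xs!i = 1}" by auto
  finally show ?thesis .
qed

lemma cnt_even: "cnt (2*m) = real ((2*m) choose m)"
proof -
  let ?n = "2*m"
  let ?X = "{zs \<in> paths ?n. walk zs ?n = 0}"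
  let ?Y = "{S. S \<subseteq> {0..<?n} \<and> card S = m}"
  let ?f = "\<lambda>xs. {i\<in>{0..<?n}. xs!i = (1::int)}"
  let ?g = "\<lambda>S. map (\<lambda>i. if i \<in> S then 1 else (-1::int)) [0..<?n]"
  have walkn: "xs \<in> paths ?n \<Longrightarrow> walk xs ?n = sum_list xs" for xs by (simp add: walk_def paths_def)
  have gp: "?g S \<in> paths ?n" for S unfolding paths_def by auto
  have fg: "S \<subseteq> {0..<?n} \<Longrightarrow> ?f (?g S) = S" for S by (auto split: if_splits)
  have bij: "bij_betw ?f ?X ?Y"
  proof (rule bij_betw_byWitness[where f'="?g"])
    show "\<forall>xs\<in>?X. ?g (?f xs) = xs"
    proof
      fix xs assume xs: "xs \<in> ?X"
      have len: "length xs = ?n" and set: "set xs \<subseteq> {-1,1}" using xs by (auto simp: paths_def)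
      show "?g (?f xs) = xs"
      proof (rule nth_equalityI)
        fix i assume "i < length (?g (?f xs))"
        then have i: "i < ?n" by simp
        then have "xs!i \<in> set xs" using len by simp
        then have "xs!i \<in> {-1,1}" using set by blast
        then show "?g (?f xs) ! i = xs ! i" using i by auto
      qed (simp add: len)
    qed
    show "\<forall>S\<in>?Y. ?f (?g S) = S" using fg by blast
    show "?f ` ?X \<subseteq> ?Y"
    proof
      fix S assume "S \<in> ?f ` ?X"
      then obtain xs where xs: "xs \<in> ?X" and S: "S = ?f xs" by blast
      have "sum_list xs = 0" using xs walkn by auto
      then have "2 * int (card S) - int ?n = 0" using sum_list_paths[of xs ?n] xs S by simp
      then show "S \<in> ?Y" using S by auto
    qed
    show "?g ` ?Y \<subseteq> ?X"
    proof
      fix xs assume "xs \<in> ?g ` ?Y"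
      then obtain S where S: "S \<in> ?Y" and xs: "xs = ?g S" by blast
      have "sum_list xs = 2 * int (card S) - int ?n"
        using sum_list_paths[OF gp[of S]] fg[of S] S xs by simp
      then show "xs \<in> ?X" using S xs gp walkn by auto
    qed
  qed
  have "card ?X = card ?Y" using bij_betw_same_card[OF bij] .
  also have "\<dots> = ?n choose m" using n_subsets[of "{0..<?n}" m] by simp
  finally show ?thesis unfolding cnt_def by simp
qed

lemma aux_field: fixes x y F f :: real assumes "y > 0" "f \<noteq> 0"
  shows "(2*y)*(2*x+1)*F / ((y*f)*(y*f)) * y = 2*(2*x+1)*(F/(f*f))"
  using assms by (simp add: field_simps)

lemma central_rec: "real ((2*(m+1)) choose (m+1)) * (real m + 1) = 2 * (2*real m+1) * real ((2*m) choose m)"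
proof -
  have a: "real ((2*(m+1)) choose (m+1)) = fact (2*m+2) / (fact (m+1) * fact (m+1))"
    using binomial_fact[of "m+1" "2*(m+1)"] by (simp add: algebra_simps)
  have b: "real ((2*m) choose m) = fact (2*m) / (fact m * fact m)"
    using binomial_fact[of m "2*m"] by simp
  have e: "2*m+2 = Suc (Suc (2*m))" by simp
  have f2: "(fact (2*m+2)::real) = (2*(real m+1))*(2*real m+1)*fact (2*m)"
    unfolding e fact_Suc by (simp add: algebra_simps)
  have f1: "(fact (m+1)::real) = (real m+1) * fact m" by (simp add: distrib_right)
  show ?thesis unfolding a b f2 f1 by (rule aux_field) auto
qed

lemma central_sq: "m \<ge> 1 \<Longrightarrow> 4 * real m * (real ((2*m) choose m))^2 \<ge> 16^m"
proof (induction m rule: dec_induct)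
  case base then show ?case by simp
next
  case (step m)
  let ?C = "real ((2*m) choose m)"
  let ?D = "real ((2*(m+1)) choose (m+1))"
  have D: "(?D * (real m+1))^2 = (2 * (2*real m+1))^2 * ?C^2"
    by (subst central_rec) (simp only: power_mult_distrib)
  have "(real m + 1) * (4 * real (Suc m) * ?D^2) = 4 * (?D * (real m+1))^2"
    by (simp only: power2_eq_square of_nat_Suc) (simp add: algebra_simps)
  also have "\<dots> = 16 * (2*m+1)^2 * ?C^2" unfolding D by (simp add: power2_eq_square algebra_simps)
  also have "\<dots> \<ge> 16 * (4*m*(m+1)) * ?C^2"
    by (intro mult_right_mono mult_left_mono) (auto simp: power2_eq_square algebra_simps)
  also have "16 * (4*m*(m+1)) * ?C^2 = (real m + 1) * (16 * (4 * m * ?C^2))" by (simp add: algebra_simps)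
  finally have "(real m + 1) * (4 * real (Suc m) * ?D^2) \<ge> (real m + 1) * (16 * (4 * m * ?C^2))" .
  then have "4 * real (Suc m) * ?D^2 \<ge> 16 * (4 * m * ?C^2)"
    by (rule mult_left_le_imp_le) simp
  moreover have "16 * (4 * m * ?C^2) \<ge> 16 * 16^m" using step by simp
  ultimately show ?case by simp
qed

definition u :: "nat \<Rightarrow> real" where "u k = cnt k / 2^k"

lemma u_nonneg: "u k \<ge> 0" unfolding u_def cnt_def by simp

lemma u_sq: "m \<ge> 1 \<Longrightarrow> (u (2*m))^2 \<ge> 1 / (4 * m)"
proof -
  assume m: "m \<ge> 1"
  have "(u (2*m))^2 = (real ((2*m) choose m))^2 / 16^m"
  proof -
    have "((2::real)^(2*m))^2 = 16^m"
      by (simp add: power_mult[symmetric] mult.commute[of 2 m]) (simp add: power_mult)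
    then show ?thesis unfolding u_def cnt_even power_divide by simp
  qed
  also have "\<dots> \<ge> 1 / (4*real m)"
    using central_sq[OF m] m by (simp add: field_simps)
  finally show ?thesis .
qed



definition p :: "real \<Rightarrow> nat \<Rightarrow> real" where "p d n = Apin 0 n d / 2^n"

lemma p_nonneg: "p d n \<ge> 0" unfolding p_def Apin_def using Wt_nonneg by simp

lemma p_ge_u: "d \<ge> 0 \<Longrightarrow> p d n \<ge> u n"
  unfolding p_def u_def using Apin0_ge by (simp add: divide_right_mono)

lemma p_rec:
  assumes "d \<ge> 0"
  shows "p d n \<ge> (1 - exp (-d)) * (\<Sum>i\<in>{1..n}. p d i * u (n - i))"
proof -
  have "(\<Sum>i\<in>{1..n}. p d i * u (n - i)) = (\<Sum>i\<in>{1..n}. Apin 0 i d * cnt (n - i)) / 2^n"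
    unfolding sum_divide_distrib
  proof (intro sum.cong refl)
    fix i assume "i \<in> {1..n}"
    then have "(2::real)^n = 2^i * 2^(n-i)" by (simp add: power_add[symmetric])
    then show "p d i * u (n - i) = Apin 0 i d * cnt (n - i) / 2^n"
      unfolding p_def u_def by simp
  qed
  moreover have "(1 - exp (-d)) * (\<Sum>i\<in>{1..n}. Apin 0 i d * cnt (n - i)) / 2^n \<le> Apin 0 n d / 2^n"
    using Apin0_rec[OF assms, of n] by (rule divide_right_mono) simp
  ultimately show ?thesis unfolding p_def by simp
qed

lemma sum_even_le:
  fixes f :: "nat \<Rightarrow> real"
  assumes "\<And>i. f i \<ge> 0" "(\<lambda>a. 2*a) ` A \<subseteq> {1..n}" "finite A"
  shows "(\<Sum>a\<in>A. f (2*a)) \<le> (\<Sum>i\<in>{1..n}. f i)"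
proof -
  have "(\<Sum>a\<in>A. f (2*a)) = (\<Sum>i\<in>(\<lambda>a. 2*a) ` A. f i)"
    by (subst sum.reindex) (auto simp: inj_on_def)
  also have "\<dots> \<le> (\<Sum>i\<in>{1..n}. f i)"
    by (rule sum_mono2) (use assms in auto)
  finally show ?thesis .
qed

lemma u_ge_s:
  assumes "1 \<le> g" "g \<le> 2*m"
  shows "u (2*g) \<ge> 1 / (2 * sqrt (2*real m))"
proof -
  have m: "m \<ge> 1" using assms by simp
  have "(1 / (2 * sqrt (2*real m)))^2 = 1 / (8 * real m)"
    by (simp add: power_divide power_mult_distrib)
  also have "\<dots> \<le> 1 / (4 * real g)" using assms by (simp add: frac_le)
  also have "\<dots> \<le> (u (2*g))^2" using u_sq assms by simp
  finally show ?thesis by (rule power2_le_imp_le) (rule u_nonneg)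
qed

lemma p_big:
  assumes d: "d > 0"
  shows "\<exists>a>0. p d a > 1"
proof -
  define c where "c = 1 - exp (-d)"
  have c: "c > 0" "c \<le> 1" using d by (auto simp: c_def)
  define m :: nat where "m = nat \<lceil>512 / c^4\<rceil> + 1"
  have m1: "m \<ge> 1" by (simp add: m_def)
  have mbig: "real m > 512 / c^4" unfolding m_def by linarith
  define s where "s = 1 / (2 * sqrt (2*real m))"
  have s0: "s \<ge> 0" by (simp add: s_def)
  have us: "\<And>g. 1 \<le> g \<Longrightarrow> g \<le> 2*m \<Longrightarrow> u (2*g) \<ge> s" unfolding s_def by (rule u_ge_s) auto
  have step1: "p d (2*b) \<ge> c * m * s^2" if b: "m+1 \<le> b" "b \<le> 2*m" for b
  proof -
    have "c * m * s^2 = c * (\<Sum>a\<in>{1..m}. s * s)" by (simp add: power2_eq_square)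
    also have "\<dots> \<le> c * (\<Sum>a\<in>{1..m}. u (2*a) * u (2*b - 2*a))"
    proof (intro mult_left_mono sum_mono)
      fix a assume a: "a \<in> {1..m}"
      have e: "2*b - 2*a = 2*(b-a)" by simp
      show "s * s \<le> u (2*a) * u (2*b - 2*a)" unfolding e
        using a b us[of a] us[of "b-a"] s0 by (intro mult_mono) auto
    qed (use c in auto)
    also have "\<dots> \<le> c * (\<Sum>i\<in>{1..2*b}. p d i * u (2*b - i))"
    proof (intro mult_left_mono)
      have "(\<Sum>a\<in>{1..m}. u (2*a) * u (2*b - 2*a)) \<le> (\<Sum>a\<in>{1..m}. p d (2*a) * u (2*b - 2*a))"
        using p_ge_u[of d] d by (intro sum_mono mult_right_mono u_nonneg) auto
      also have "\<dots> \<le> (\<Sum>i\<in>{1..2*b}. p d i * u (2*b - i))"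
        using b by (intro sum_even_le[where f="\<lambda>i. p d i * u (2*b - i)"]) (auto intro: mult_nonneg_nonneg p_nonneg u_nonneg)
      finally show "(\<Sum>a\<in>{1..m}. u (2*a) * u (2*b - 2*a)) \<le> (\<Sum>i\<in>{1..2*b}. p d i * u (2*b - i))" .
    qed (use c in auto)
    also have "\<dots> \<le> p d (2*b)" using p_rec[of d "2*b"] d c_def by simp
    finally show ?thesis .
  qed
  define j where "j = 2*m+1"
  have "c * m * (c * m * s^2) * s = c * (\<Sum>b\<in>{m+1..2*m}. (c * m * s^2) * s)" by simp
  also have "\<dots> \<le> c * (\<Sum>b\<in>{m+1..2*m}. p d (2*b) * u (2*j - 2*b))"
  proof (intro mult_left_mono sum_mono)
    fix b assume b: "b \<in> {m+1..2*m}"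
    have e: "2*j - 2*b = 2*(j-b)" by simp
    show "(c * m * s^2) * s \<le> p d (2*b) * u (2*j - 2*b)" unfolding e
      using b step1[of b] us[of "j-b"] s0 c p_nonneg[of d "2*b"] unfolding j_def
      by (intro mult_mono) auto
  qed (use c in auto)
  also have "\<dots> \<le> c * (\<Sum>i\<in>{1..2*j}. p d i * u (2*j - i))"
    using c unfolding j_def
    by (intro mult_left_mono sum_even_le[where f="\<lambda>i. p d i * u (2*(2*m+1) - i)"]) (auto intro: mult_nonneg_nonneg p_nonneg u_nonneg)
  also have "\<dots> \<le> p d (2*j)" using p_rec[of d "2*j"] d c_def by simp
  finally have V: "c * m * (c * m * s^2) * s \<le> p d (2*j)" .
  define V where "V = c * m * (c * m * s^2) * s"
  have V0: "V \<ge> 0" unfolding V_def using c s0 by simp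
  have s2: "s^2 = 1 / (8 * m)" unfolding s_def using m1 by (simp add: power_divide power_mult_distrib)
  have "V^2 = c^4 * (real m)^4 * (s^2)^3" unfolding V_def by algebra
  also have "\<dots> = c^4 * real m / 512"
    unfolding s2 using m1 by (simp add: field_simps power3_eq_cube power4_eq_xxxx)
  also have "\<dots> > 1" using mbig c by (simp add: field_simps)
  finally have "V > 1"
    using V0 by (smt (verit) one_le_power power2_eq_square mult_le_one)
  then show ?thesis using V unfolding V_def by (intro exI[of _ "2*j"]) (auto simp: j_def)
qed



lemma Wt_ge: "d \<ge> 0 \<Longrightarrow> Wt T k d (\<lambda>_. True) \<ge> 2^k"
proof -
  assume d: "d \<ge> 0"
  have "(2::real)^k = (\<Sum>xs\<in>paths k. 1)" by (simp add: paths_card)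
  also have "\<dots> \<le> Wt T k d (\<lambda>_. True)" unfolding Wt_def weight_def
    using d by (intro sum_mono) simp
  finally show ?thesis .
qed

definition Z0 :: "real \<Rightarrow> nat \<Rightarrow> real" where "Z0 d k = Wt 0 k d (\<lambda>_. True) / 2^k"

lemma Z0_ge1: "d \<ge> 0 \<Longrightarrow> Z0 d k \<ge> 1"
  unfolding Z0_def using Wt_ge[where T=0 and k=k and d=d] by (simp add: field_simps)

lemma Z0_mult: "Z0 d (a+b) \<ge> p d a * Z0 d b"
proof -
  have "p d a * Z0 d b = (Apin 0 a d * Wt 0 b d (\<lambda>_. True)) / 2^(a+b)"
    unfolding p_def Z0_def by (simp add: power_add)
  also have "\<dots> \<le> Z0 d (a+b)" unfolding Z0_def
    by (rule divide_right_mono[OF supermult]) simp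
  finally show ?thesis .
qed

lemma Z0_pow: "d \<ge> 0 \<Longrightarrow> Z0 d (t*a + r) \<ge> (p d a)^t"
proof (induction t)
  case 0 then show ?case using Z0_ge1 by simp
next
  case (Suc t)
  have "(p d a)^(Suc t) = p d a * (p d a)^t" by simp
  also have "\<dots> \<le> p d a * Z0 d (t*a + r)" using Suc p_nonneg by (intro mult_left_mono) auto
  also have "\<dots> \<le> Z0 d (a + (t*a + r))" by (rule Z0_mult)
  finally show ?case by (simp add: add.assoc)
qed

lemma decay:
  fixes \<rho> :: real
  assumes r: "\<rho> > 1" and a: "a > 0"
  shows "1 / \<rho>^(l div a) \<le> \<rho> * (\<rho> powr (-1/a))^l"
proof -
  have "l < (l div a + 1) * a"
  proof -
    have "l = l div a * a + l mod a" by simp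
    also have "\<dots> < l div a * a + a" by (rule add_strict_left_mono) (rule mod_less_divisor[OF a])
    finally show ?thesis by (simp add: algebra_simps)
  qed
  then have "real l < (real (l div a) + 1) * real a" by (metis of_nat_1 of_nat_add of_nat_less_iff of_nat_mult)
  then have le: "real l / real a - 1 \<le> real (l div a)" using a by (simp add: field_simps)
  have "\<rho> powr (real l / real a - 1) \<le> \<rho> powr (real (l div a))"
    using le r by (intro powr_mono) auto
  also have "\<dots> = \<rho>^(l div a)" using r by (simp add: powr_realpow)
  finally have 1: "\<rho> powr (real l / real a - 1) \<le> \<rho>^(l div a)" .
  have "\<rho> * (\<rho> powr (-1/a))^l = \<rho> powr 1 * \<rho> powr (real l * (-1/a))"
    using r by (simp add: powr_power)
  also have "\<dots> = \<rho> powr (1 + real l * (-1/a))" by (simp only: powr_add[symmetric])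
  also have "\<dots> = \<rho> powr (1 - real l / real a)" by simp
  also have "\<dots> = 1 / \<rho> powr (real l / real a - 1)"
    by (simp add: powr_minus_divide[symmetric])
  finally have 2: "\<rho> * (\<rho> powr (-1/a))^l = 1 / \<rho> powr (real l / real a - 1)" .
  show ?thesis unfolding 2 using 1 r by (intro divide_left_mono) auto
qed

lemma P_bound:
  assumes d: "d \<ge> 0" and l: "l \<le> N"
  shows "Ppol T N d (\<lambda>xs. mu T N xs = N - l) \<le> 1 / Z0 d l"
proof -
  have N: "N = (N - l) + l" using l by simp
  let ?W = "Wt T N d (\<lambda>_. True)"
  let ?B = "Wt T l d (\<lambda>_. True)"
  have W0: "?W > 0" by (rule Wt_pos)
  have B0: "?B > 0" by (rule Wt_pos)
  have m: "Wt T N d (\<lambda>xs. mu T N xs = N - l) \<le> 2^l * Apin T (N-l) d"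
    using mu_bound[of T "N-l" l d] N by simp
  have s: "Apin T (N-l) d * ?B \<le> ?W" using supermult[of T "N-l" d l] N by simp
  have "Wt T N d (\<lambda>xs. mu T N xs = N - l) * ?B \<le> 2^l * Apin T (N-l) d * ?B"
    using m B0 by (intro mult_right_mono) auto
  also have "\<dots> \<le> 2^l * ?W" using s by (simp add: mult.assoc)
  finally have "Wt T N d (\<lambda>xs. mu T N xs = N - l) / ?W \<le> 2^l / ?B"
    using W0 B0 by (simp add: field_simps)
  also have "\<dots> \<le> 2^l / Wt 0 l d (\<lambda>_. True)"
    using Wt_mono_T[OF d, of l T] Wt_pos[of 0 l d] by (intro divide_left_mono) auto
  also have "\<dots> = 1 / Z0 d l" unfolding Z0_def by simp
  finally show ?thesis unfolding Ppol_eq .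
qed

lemma Wt_split:
  "Wt T N d (\<lambda>xs. mu T N xs < N - l0) = (\<Sum>l\<in>{l0+1..N}. Wt T N d (\<lambda>xs. mu T N xs = N - l))"
proof -
  have "(\<Sum>l\<in>{l0+1..N}. Wt T N d (\<lambda>xs. mu T N xs = N - l))
      = (\<Sum>xs\<in>paths N. \<Sum>l\<in>{l0+1..N}. if mu T N xs = N - l then weight T N d xs else 0)"
    unfolding Wt_def by (rule sum.swap)
  also have "\<dots> = (\<Sum>xs\<in>paths N. if mu T N xs < N - l0 then weight T N d xs else 0)"
  proof (intro sum.cong refl)
    fix xs
    have mle: "mu T N xs \<le> N" by (rule mu_le)
    have "(\<Sum>l\<in>{l0+1..N}. if mu T N xs = N - l then weight T N d xs else 0)
        = (\<Sum>l\<in>{l0+1..N}. if l = N - mu T N xs then weight T N d xs else 0)"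
      using mle by (intro sum.cong refl) auto
    also have "\<dots> = (if N - mu T N xs \<in> {l0+1..N} then weight T N d xs else 0)"
      by (rule sum.delta) simp
    also have "\<dots> = (if mu T N xs < N - l0 then weight T N d xs else 0)"
      using mle by auto
    finally show "(\<Sum>l\<in>{l0+1..N}. if mu T N xs = N - l then weight T N d xs else 0)
        = (if mu T N xs < N - l0 then weight T N d xs else 0)" .
  qed
  finally show ?thesis unfolding Wt_def by simp
qed



theorem mainTheorem17:
  fixes \<delta> :: real and T :: "nat \<Rightarrow> int"
  assumes "\<delta> > 0"
    and "\<And>N. T N > 0 \<and> even (T N)"
  shows "\<forall>\<epsilon>>0. \<exists>l0::nat. \<forall>N::nat.
           Ppol (T N) N \<delta> (\<lambda>xs. mu (T N) N xs < N - l0)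
             = (\<Sum>l\<in>{l0+1..N}. Ppol (T N) N \<delta> (\<lambda>xs. mu (T N) N xs = N - l))
         \<and> Ppol (T N) N \<delta> (\<lambda>xs. mu (T N) N xs < N - l0) \<le> \<epsilon>"
proof (intro allI impI)
  fix \<epsilon> :: real assume eps: "\<epsilon> > 0"
  have d0: "\<delta> \<ge> 0" using assms(1) by simp
  obtain a where a: "a > 0" "p \<delta> a > 1" using p_big[OF assms(1)] by blast
  define \<rho> where "\<rho> = p \<delta> a"
  have rho: "\<rho> > 1" using a by (simp add: \<rho>_def)
  define r where "r = \<rho> powr (-1/a)"
  have r0: "r > 0" using rho by (simp add: r_def)
  have r1: "r < 1" unfolding r_def using rho a by (intro powr_less_one) auto
  have pos: "\<epsilon> * (1 - r) / \<rho> > 0" using eps r1 rho by simp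
  obtain n where n: "r^n < \<epsilon> * (1 - r) / \<rho>" using real_arch_pow_inv[OF pos r1] by blast
  show "\<exists>l0::nat. \<forall>N::nat.
           Ppol (T N) N \<delta> (\<lambda>xs. mu (T N) N xs < N - l0)
             = (\<Sum>l\<in>{l0+1..N}. Ppol (T N) N \<delta> (\<lambda>xs. mu (T N) N xs = N - l))
         \<and> Ppol (T N) N \<delta> (\<lambda>xs. mu (T N) N xs < N - l0) \<le> \<epsilon>"
  proof (intro exI allI conjI)
    fix N
    show eq: "Ppol (T N) N \<delta> (\<lambda>xs. mu (T N) N xs < N - n)
             = (\<Sum>l\<in>{n+1..N}. Ppol (T N) N \<delta> (\<lambda>xs. mu (T N) N xs = N - l))"
      unfolding Ppol_eq Wt_split sum_divide_distrib ..
    have "(\<Sum>l\<in>{n+1..N}. Ppol (T N) N \<delta> (\<lambda>xs. mu (T N) N xs = N - l))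
        \<le> (\<Sum>l\<in>{n+1..N}. \<rho> * r^l)"
    proof (intro sum_mono)
      fix l assume l: "l \<in> {n+1..N}"
      have "Ppol (T N) N \<delta> (\<lambda>xs. mu (T N) N xs = N - l) \<le> 1 / Z0 \<delta> l"
        using P_bound[OF d0] l by simp
      also have "\<dots> \<le> 1 / \<rho>^(l div a)"
      proof -
        have "Z0 \<delta> ((l div a)*a + l mod a) \<ge> \<rho>^(l div a)"
          unfolding \<rho>_def by (rule Z0_pow[OF d0])
        then have "Z0 \<delta> l \<ge> \<rho>^(l div a)" by simp
        moreover have "\<rho>^(l div a) > 0" using rho by simp
        ultimately show ?thesis by (intro divide_left_mono) (auto intro: mult_pos_pos)
      qed
      also have "\<dots> \<le> \<rho> * r^l" unfolding r_def by (rule decay[OF rho a(1)])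
      finally show "Ppol (T N) N \<delta> (\<lambda>xs. mu (T N) N xs = N - l) \<le> \<rho> * r^l" .
    qed
    also have "\<dots> = \<rho> * (\<Sum>l\<in>{n+1..N}. r^l)" by (simp add: sum_distrib_left)
    also have "(\<Sum>l\<in>{n+1..N}. r^l) \<le> r^n / (1 - r)"
    proof -
      have "(\<Sum>l\<in>{n+1..N}. r^l) \<le> r^(n+1) / (1 - r)"
        unfolding sum_gp using r0 r1 by (auto simp: divide_right_mono)
      also have "\<dots> \<le> r^n / (1 - r)"
        using r0 r1 by (intro divide_right_mono) (auto simp: power_le_imp_le_exp mult_left_le_one_le)
      finally show ?thesis .
    qed
    then have "\<rho> * (\<Sum>l\<in>{n+1..N}. r^l) \<le> \<rho> * (r^n / (1 - r))" using rho by (intro mult_left_mono) auto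
    also have "\<dots> \<le> \<epsilon>" using n rho r1 by (simp add: field_simps)
    finally show "Ppol (T N) N \<delta> (\<lambda>xs. mu (T N) N xs < N - n) \<le> \<epsilon>" unfolding eq .
  qed
qed


end
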